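(* Let $n=2k$ with $k\ge1$, and let $$W(X_1,\dots,X_n)=\sum_{j=1}^nX_j+\sum_{j=1}^n\frac1{X_j}+\prod_{j=1}^nX_j$$ on $(\mathbb{C}^* )^n$. Then every critical point of $W$ in $(\mathbb{C}^* )^n$ is non-degenerate, i.e. the Hessian matrix $(\partial^2W/\partial X_j\partial X_k)$ is invertible at every point where $\nabla W=0$.
   Context: $W$ is the superpotential $\sum_{v\in\mathrm{vert}(P)}x^v$ of the pseudo del Pezzo polytope $P^k_{pdP}\subset\mathbb{R}^{2k}$. This polytope is the convex hull of $\pm e_1,\dots,\pm e_{2k}$ and $e_1+\dots+e_{2k}$, and it is the polytope associated with the pseudo del Pezzo toric variety $U_k$. *)

theory Defs
  imports "HOL-Analysis.Analysis"
begin

definition W :: "complex^'n \<Rightarrow> complex" where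
  "W X = (\<Sum>j\<in>UNIV. X$j) + (\<Sum>j\<in>UNIV. 1 / X$j) + (\<Prod>j\<in>UNIV. X$j)"

definition partial :: "'n \<Rightarrow> (complex^'n \<Rightarrow> complex) \<Rightarrow> complex^'n \<Rightarrow> complex" where
  "partial j f X = deriv (\<lambda>t. f (\<chi> i. if i = j then t else X$i)) (X$j)"

definition hessian :: "(complex^'n \<Rightarrow> complex) \<Rightarrow> complex^'n \<Rightarrow> complex^'n^'n" where
  "hessian f X = (\<chi> j l. partial j (partial l f) X)"

end

theory Submission
  imports Defs
begin

definition upd :: "complex^'n \<Rightarrow> 'n \<Rightarrow> complex \<Rightarrow> complex^'n" where
  "upd X j t = (\<chi> i. if i = j then t else X$i)"

lemma partial_alt: "partial j f X = deriv (\<lambda>t. f (upd X j t)) (X$j)"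
  by (simp add: partial_def upd_def)

lemma upd_nth[simp]: "upd X j t $ i = (if i = j then t else X$i)"
  by (simp add: upd_def)

lemma sum_upd: "(\<Sum>i\<in>UNIV. g (upd Z l t $ i)) = g t + (\<Sum>i\<in>UNIV-{l}. g (Z$i))"
proof -
  have "(\<Sum>i\<in>UNIV. g (upd Z l t $ i)) = g (upd Z l t $ l) + (\<Sum>i\<in>UNIV-{l}. g (upd Z l t $ i))"
    by (rule sum.remove) auto
  also have "(\<Sum>i\<in>UNIV-{l}. g (upd Z l t $ i)) = (\<Sum>i\<in>UNIV-{l}. g (Z$i))"
    by (rule sum.cong) auto
  finally show ?thesis by simp
qed

lemma prod_upd: "(\<Prod>i\<in>UNIV. upd Z l t $ i) = t * (\<Prod>i\<in>UNIV-{l}. Z$i)"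
proof -
  have "(\<Prod>i\<in>UNIV. upd Z l t $ i) = upd Z l t $ l * (\<Prod>i\<in>UNIV-{l}. upd Z l t $ i)"
    by (rule prod.remove) auto
  also have "(\<Prod>i\<in>UNIV-{l}. upd Z l t $ i) = (\<Prod>i\<in>UNIV-{l}. Z$i)"
    by (rule prod.cong) auto
  finally show ?thesis by simp
qed

lemma W_upd: "W (upd Z l t) = t + (\<Sum>i\<in>UNIV-{l}. Z$i) + (1/t + (\<Sum>i\<in>UNIV-{l}. 1/Z$i))
   + t * (\<Prod>i\<in>UNIV-{l}. Z$i)"
  unfolding W_def using sum_upd[of "\<lambda>x. x" Z l t] sum_upd[of "\<lambda>x. 1/x" Z l t] prod_upd[of Z l t]
  by (simp del: upd_nth)

lemma partial_W:
  assumes "Z$l \<noteq> 0"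
  shows "partial l W Z = 1 - 1/(Z$l)^2 + (\<Prod>i\<in>UNIV-{l}. Z$i)"
proof -
  have "((\<lambda>t. W (upd Z l t)) has_field_derivative (1 - 1/(Z$l)^2 + (\<Prod>i\<in>UNIV-{l}. Z$i))) (at (Z$l))"
    unfolding W_upd
    using assms
    by (auto intro!: derivative_eq_intros simp: power2_eq_square field_simps)
  then show ?thesis unfolding partial_alt by (rule DERIV_imp_deriv)
qed

lemma prod_upd_gen: "finite S \<Longrightarrow> l \<in> S \<Longrightarrow> (\<Prod>i\<in>S. upd Z l t $ i) = t * (\<Prod>i\<in>S-{l}. Z$i)"
proof -
  assume S: "finite S" "l \<in> S"
  have "(\<Prod>i\<in>S. upd Z l t $ i) = upd Z l t $ l * (\<Prod>i\<in>S-{l}. upd Z l t $ i)"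
    by (rule prod.remove) (use S in auto)
  also have "(\<Prod>i\<in>S-{l}. upd Z l t $ i) = (\<Prod>i\<in>S-{l}. Z$i)"
    by (rule prod.cong) auto
  finally show ?thesis by simp
qed

lemma hess_off:
  assumes "j \<noteq> l" "X$l \<noteq> 0"
  shows "hessian W X $ j $ l = (\<Prod>i\<in>UNIV-{l}-{j}. X$i)"
proof -
  have eq: "partial l W (upd X j t) = 1 - 1/(X$l)^2 + t * (\<Prod>i\<in>UNIV-{l}-{j}. X$i)" for t
    using assms partial_W[of "upd X j t" l] prod_upd_gen[of "UNIV-{l}" j X t] by simp
  have "((\<lambda>t. partial l W (upd X j t)) has_field_derivative (\<Prod>i\<in>UNIV-{l}-{j}. X$i)) (at (X$j))"
    unfolding eq by (auto intro!: derivative_eq_intros)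
  then have "partial j (partial l W) X = (\<Prod>i\<in>UNIV-{l}-{j}. X$i)"
    unfolding partial_alt[of j "partial l W" X] by (rule DERIV_imp_deriv)
  then show ?thesis unfolding hessian_def by simp
qed

lemma hess_diag:
  assumes "X$j \<noteq> 0"
  shows "hessian W X $ j $ j = 2/(X$j)^3"
proof -
  let ?R = "\<Prod>i\<in>UNIV-{j}. X$i"
  have eq: "t \<in> -{0} \<Longrightarrow> 1 - 1/t^2 + ?R = partial j W (upd X j t)" for t
  proof -
    assume t: "t \<in> -{0}"
    have "(\<Prod>i\<in>UNIV-{j}. upd X j t $ i) = ?R" by (rule prod.cong) auto
    then show ?thesis using t partial_W[of "upd X j t" j] by simp
  qed
  have "((\<lambda>t. 1 - 1/t^2 + ?R) has_field_derivative 2/(X$j)^3) (at (X$j))"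
    using assms by (auto intro!: derivative_eq_intros simp: field_simps eval_nat_numeral)
  then have "((\<lambda>t. partial j W (upd X j t)) has_field_derivative 2/(X$j)^3) (at (X$j))"
    by (rule has_field_derivative_transform_within_open[where S="-{0}"]) (use assms eq in auto)
  then have "partial j (partial j W) X = 2/(X$j)^3"
    unfolding partial_alt[of j "partial j W" X] by (rule DERIV_imp_deriv)
  then show ?thesis unfolding hessian_def by simp
qed

lemma real_ineq:
  fixes d :: nat
  assumes "d \<ge> 1"
  shows "((real (2*d)+1)/(real (2*d)-1))^(2*d) * (real (2*d)^2 - 1) > 4"
proof -
  define c where "c = real (2*d)"
  have c2: "c \<ge> 2" using assms by (simp add: c_def)
  define q where "q = (c+1)/(c-1)"
  have q1: "q \<ge> 1" using c2 by (simp add: q_def field_simps)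
  have "q^2 \<le> q^(2*d)" by (rule power_increasing) (use assms q1 in auto)
  moreover have "q^2 * (c^2-1) = (c+1)^3/(c-1)"
  proof -
    have ne: "c - 1 \<noteq> 0" using c2 by simp
    have "q^2 * (c^2-1) = (c+1)^2 * ((c+1)*(c-1)) / (c-1)^2"
      by (simp add: q_def power_divide power2_eq_square algebra_simps)
    also have "\<dots> = (c+1)^3/(c-1)" using ne
      by (simp add: power2_eq_square power3_eq_cube)
    finally show ?thesis .
  qed
  moreover have "(c+1)^3/(c-1) > 4"
  proof -
    have a: "(c+1)*(c+1) \<ge> 3*3" using c2 by (intro mult_mono) auto
    have "(c+1)*(c+1)*(c+1) \<ge> 9*(c+1)" using a c2 by (intro mult_mono) auto
    then have "(c+1)^3 > 4*(c-1)" using c2 by (simp add: power3_eq_cube)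
    then show ?thesis using c2 by (simp add: field_simps)
  qed
  moreover have "c^2 - 1 > 0"
  proof -
    have "c*c \<ge> 2*2" using c2 by (intro mult_mono) auto
    then show ?thesis by (simp add: power2_eq_square)
  qed
  ultimately have "q^(2*d) * (c^2-1) > 4"
    by (smt (verit) mult_right_mono)
  then show ?thesis by (simp add: q_def c_def)
qed

lemma no_bad:
  fixes X :: "complex^'n" and k :: nat and P :: complex
  assumes n: "CARD('n) = 2*k" and nz: "\<forall>j. X$j \<noteq> 0" and Pdef: "P = (\<Prod>j\<in>UNIV. X$j)"
    and quad: "\<forall>j. (X$j)^2 + P*X$j - 1 = 0"
    and Q: "4 + P^2 \<noteq> 0"
    and S: "P * (\<Sum>j\<in>UNIV. 1/(2*X$j+P)) = -1"
  shows False
proof -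
  define y where "y j = 2*X$j + P" for j
  have ysq: "(y j)^2 = 4 + P^2" for j
  proof -
    have "(y j)^2 = 4*((X$j)^2 + P*X$j - 1) + 4 + P^2"
      by (simp add: y_def power2_eq_square algebra_simps)
    then show ?thesis using quad by simp
  qed
  obtain j0 :: 'n where True by simp
  define y0 where "y0 = y j0"
  have y0nz: "y0 \<noteq> 0" using ysq[of j0] Q by (auto simp: y0_def)
  have ypm: "y j = y0 \<or> y j = -y0" for j
  proof -
    have "(y j)^2 = (y j0)^2" using ysq[of j] ysq[of j0] by simp
    then show ?thesis unfolding power2_eq_iff y0_def .
  qed
  obtain r where r: "r = y0 \<or> r = -y0" and m: "card {j. y j = r} \<ge> k"
  proof (cases "card {j. y j = y0} \<ge> k")
    case True then show ?thesis using that by blast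
  next
    case False
    have "UNIV \<subseteq> {j. y j = y0} \<union> {j. y j = -y0}" using ypm by auto
    then have "card (UNIV::'n set) \<le> card ({j. y j = y0} \<union> {j. y j = -y0})"
      by (intro card_mono) auto
    also have "\<dots> \<le> card {j. y j = y0} + card {j. y j = -y0}" by (rule card_Un_le)
    finally have "card {j. y j = -y0} \<ge> k" using False n by simp
    then show ?thesis using that by blast
  qed
  have rnz: "r \<noteq> 0" using r y0nz by auto
  have yr: "y j = r \<or> y j = -r" for j using ypm[of j] r by auto
  define A where "A = {j. y j = r}"
  define mm where "mm = card A"
  have mle: "mm \<le> 2*k" using n card_mono[of UNIV A] by (simp add: mm_def)
  have cB: "card (UNIV - A) = 2*k - mm" using n by (simp add: card_Diff_subset mm_def)
  have yB: "j \<in> UNIV - A \<Longrightarrow> y j = -r" for j using yr[of j] by (auto simp: A_def)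
  have sumy: "(\<Sum>j\<in>UNIV. 1/y j) = of_nat mm / r - of_nat (2*k - mm) / r"
  proof -
    have "(\<Sum>j\<in>UNIV. 1/y j) = (\<Sum>j\<in>UNIV \<inter> A. 1/y j) + (\<Sum>j\<in>UNIV - A. 1/y j)"
      by (rule sum.Int_Diff) simp
    also have "(\<Sum>j\<in>UNIV \<inter> A. 1/y j) = (\<Sum>j\<in>A. 1/r)" by (rule sum.cong) (auto simp: A_def)
    also have "(\<Sum>j\<in>UNIV - A. 1/y j) = (\<Sum>j\<in>UNIV - A. - (1/r))" by (rule sum.cong) (auto simp: yB)
    finally show ?thesis using cB by (simp add: mm_def)
  qed
  define d where "d = mm - k"
  have mmd: "mm = k + d" using m by (simp add: d_def mm_def A_def)
  have dk: "d \<le> k" using mmd mle by simp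
  define c :: complex where "c = of_nat (2*d)"
  have sumc: "(\<Sum>j\<in>UNIV. 1/y j) = c / r"
  proof -
    have "of_nat mm / r - of_nat (2*k - mm) / r = (of_nat mm - of_nat (2*k-mm)) / r"
      by (simp add: diff_divide_distrib)
    also have "of_nat mm - of_nat (2*k-mm) = (c::complex)"
      using mmd dk by (simp add: c_def of_nat_diff)
    finally show ?thesis using sumy by simp
  qed
  have rc: "r = - c * P"
  proof -
    have "P * (c / r) = -1" using S sumc unfolding y_def by simp
    then show ?thesis using rnz by (simp add: field_simps)
  qed
  have d1: "d \<ge> 1"
  proof (rule ccontr)
    assume "\<not> d \<ge> 1" then have "c = 0" by (simp add: c_def)
    then show False using rc rnz by simp
  qed
  have Pnz: "P \<noteq> 0" using rc rnz by auto
  have rsq: "r^2 = 4 + P^2" using r ysq[of j0] by (auto simp: y0_def)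
  have key: "P^2 * (c^2 - 1) = 4" using rsq rc by (simp add: power2_eq_square algebra_simps)
  define \<alpha> where "\<alpha> = (-c*P - P)/2"
  define \<beta> where "\<beta> = (c*P - P)/2"
  have XA: "j \<in> A \<Longrightarrow> X$j = \<alpha>" for j
  proof -
    assume "j \<in> A" then have "2*X$j + P = - c * P" using rc by (simp add: A_def y_def)
    then have "2*X$j = -c*P - P" by (metis add_diff_cancel_right')
    moreover have "X$j = (2*X$j)/2" by simp
    ultimately show ?thesis unfolding \<alpha>_def by metis
  qed
  have XB: "j \<in> UNIV - A \<Longrightarrow> X$j = \<beta>" for j
  proof -
    assume "j \<in> UNIV - A" then have "2*X$j + P = c * P" using rc yB[of j] by (simp add: y_def)
    then have "2*X$j = c*P - P" by (metis add_diff_cancel_right')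
    moreover have "X$j = (2*X$j)/2" by simp
    ultimately show ?thesis unfolding \<beta>_def by metis
  qed
  have Pprod: "P = \<alpha>^mm * \<beta>^(2*k-mm)"
  proof -
    have "P = (\<Prod>j\<in>UNIV \<inter> A. X$j) * (\<Prod>j\<in>UNIV - A. X$j)"
      unfolding Pdef by (rule prod.Int_Diff) simp
    also have "(\<Prod>j\<in>UNIV \<inter> A. X$j) = (\<Prod>j\<in>A. \<alpha>)" by (rule prod.cong) (auto simp: XA)
    also have "(\<Prod>j\<in>UNIV - A. X$j) = (\<Prod>j\<in>UNIV - A. \<beta>)" by (rule prod.cong) (auto simp: XB)
    finally show ?thesis using cB by (simp add: mm_def)
  qed
  have ab: "\<alpha> * \<beta> = -1"
  proof -
    have "\<alpha> * \<beta> = - (P^2 * (c^2 - 1)) / 4"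
      by (simp add: \<alpha>_def \<beta>_def power2_eq_square algebra_simps)
    then show ?thesis using key by simp
  qed
  have c1: "c - 1 \<noteq> 0"
  proof
    assume "c - 1 = 0" then have "c = 1" by simp
    then have "(of_nat (2*d) :: complex) = of_nat 1" by (simp add: c_def)
    then have "2*d = 1" using of_nat_eq_iff by blast
    then show False by simp
  qed
  have a2: "\<alpha>^2 = (c+1)/(c-1)"
  proof -
    have "\<alpha>^2 * (c-1) = (P^2 * (c^2 - 1)) * (c+1) / 4"
      by (simp add: \<alpha>_def power2_eq_square algebra_simps)
    then have "\<alpha>^2 * (c-1) = 4 * (c+1) / 4" by (simp only: key)
    moreover have "(4::complex) * (c+1) / 4 = c+1" by simp
    ultimately have "\<alpha>^2 * (c-1) = c+1" by (rule trans)
    then show ?thesis using c1 by (simp add: field_simps)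
  qed
  have "P^2 = (\<alpha>^2)^(2*d)"
  proof -
    have "P^2 = \<alpha>^(2*mm) * \<beta>^(2*(2*k-mm))" using Pprod by (simp add: power_mult_distrib power_mult[symmetric] mult.commute)
    also have "2*mm = 2*(2*d) + 2*(k-d)" using mmd dk by simp
    also have "2*(2*k-mm) = 2*(k-d)" using mmd dk by simp
    also have "\<alpha>^(2*(2*d) + 2*(k-d)) * \<beta>^(2*(k-d)) = (\<alpha>^2)^(2*d) * ((\<alpha>*\<beta>)^2)^(k-d)"
      by (simp add: power_add power_mult power_mult_distrib)
    also have "((\<alpha>*\<beta>)^2)^(k-d) = 1" using ab by simp
    finally show ?thesis by simp
  qed
  then have "((c+1)/(c-1))^(2*d) * (c^2 - 1) = 4" using key a2 by simp
  then have "complex_of_real (((real (2*d)+1)/(real (2*d)-1))^(2*d) * (real (2*d)^2 - 1)) = 4"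
    by (simp add: c_def)
  then have "((real (2*d)+1)/(real (2*d)-1))^(2*d) * (real (2*d)^2 - 1) = 4"
    by (metis of_real_eq_iff of_real_numeral)
  then show False using real_ineq[OF d1] by simp
qed

lemma Qnz:
  fixes X :: "complex^'n" and k :: nat and P :: complex
  assumes n: "CARD('n) = 2*k" and Pdef: "P = (\<Prod>j\<in>UNIV. X$j)"
    and quad: "\<forall>j. (X$j)^2 + P*X$j - 1 = 0"
  shows "4 + P^2 \<noteq> 0"
proof
  assume Q: "4 + P^2 = 0"
  then have P2: "P^2 = -4" by (simp add: add_eq_0_iff)
  have Xj: "X$j = -P/2" for j
  proof -
    have "(2*X$j + P)^2 = 4*((X$j)^2 + P*X$j - 1) + (4 + P^2)"
      by (simp add: power2_eq_square algebra_simps)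
    then have "(2*X$j + P)^2 = 0" using quad Q by simp
    then have "2*X$j + P = 0" by simp
    then have "2*X$j = -P" by (simp add: eq_neg_iff_add_eq_0)
    then show ?thesis by (metis nonzero_mult_div_cancel_left zero_neq_numeral)
  qed
  have "P = (\<Prod>j\<in>UNIV. X$j)" by (rule Pdef)
  also have "\<dots> = (\<Prod>j\<in>(UNIV::'n set). -P/2)" using Xj by simp
  also have "\<dots> = (-P/2)^(2*k)" using n by simp
  also have "\<dots> = ((-P/2)^2)^k" by (simp only: power_mult)
  also have "(-P/2)^2 = P^2/4" by (simp add: power_divide)
  also have "P^2/4 = -1" using P2 by simp
  finally have Pk: "P = (-1)^k" .
  have "((-1::complex)^k)^2 = ((-1)^2)^k" by (simp only: power_mult[symmetric] mult.commute)
  then have "P^2 = 1" using Pk by simp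
  then show False using P2 by simp
qed

theorem mainTheorem7:
  fixes k :: nat and X :: "complex^'n"
  assumes "k \<ge> 1" and "CARD('n) = 2 * k"
    and "\<forall>j. X$j \<noteq> 0"
    and "\<forall>j. partial j W X = 0"
  shows "invertible (hessian W X)"
proof -
  note n = assms(2) and nz = assms(3)
  define P where "P = (\<Prod>j\<in>UNIV. X$j)"
  have rem1: "(\<Prod>i\<in>UNIV-{l}. X$i) = P / X$l" for l
  proof -
    have "P = X$l * (\<Prod>i\<in>UNIV-{l}. X$i)" unfolding P_def by (rule prod.remove) auto
    then show ?thesis using nz by (simp add: field_simps)
  qed
  have rem2: "(\<Prod>i\<in>UNIV-{l}-{j}. X$i) = P / (X$j * X$l)" if "j \<noteq> l" for j l
  proof -
    have "(\<Prod>i\<in>UNIV-{l}. X$i) = X$j * (\<Prod>i\<in>UNIV-{l}-{j}. X$i)"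
      by (rule prod.remove) (use that in auto)
    then show ?thesis using nz rem1[of l] by (simp add: field_simps)
  qed
  have quad: "\<forall>j. (X$j)^2 + P*X$j - 1 = 0"
  proof
    fix j
    have e: "1 - 1/(X$j)^2 + P / X$j = 0" using assms(4) partial_W[of X j] nz rem1[of j] by simp
    have "(X$j)^2 + P*X$j - 1 = (X$j)^2 * (1 - 1/(X$j)^2 + P / X$j)"
      using nz by (simp add: field_simps power2_eq_square)
    then show "(X$j)^2 + P*X$j - 1 = 0" using e by simp
  qed
  have Q: "4 + P^2 \<noteq> 0" by (rule Qnz[OF n P_def quad])
  define y where "y j = 2*X$j + P" for j
  have ynz: "y j \<noteq> 0" for j
  proof
    assume "y j = 0"
    have "(y j)^2 = 4*((X$j)^2 + P*X$j - 1) + (4 + P^2)"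
      by (simp add: y_def power2_eq_square algebra_simps)
    then show False using \<open>y j = 0\<close> quad Q by simp
  qed
  show ?thesis unfolding invertible_left_inverse matrix_left_invertible_ker
  proof (intro allI impI)
    fix v :: "complex^'n"
    assume Hv: "hessian W X *v v = 0"
    define s where "s = (\<Sum>l\<in>UNIV. v$l / X$l)"
    have star: "y j * v$j + P * s * X$j = 0" for j
    proof -
      have "0 = (hessian W X *v v) $ j" using Hv by simp
      also have "\<dots> = (\<Sum>l\<in>UNIV. hessian W X $ j $ l * v$l)" by (simp add: matrix_vector_mult_def)
      also have "\<dots> = hessian W X $ j $ j * v$j + (\<Sum>l\<in>UNIV-{j}. hessian W X $ j $ l * v$l)"
        by (rule sum.remove) auto
      also have "(\<Sum>l\<in>UNIV-{j}. hessian W X $ j $ l * v$l) = (\<Sum>l\<in>UNIV-{j}. P / X$j * (v$l / X$l))"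
        by (rule sum.cong) (use nz in \<open>auto simp: hess_off rem2\<close>)
      also have "\<dots> = P / X$j * (\<Sum>l\<in>UNIV-{j}. v$l / X$l)" by (simp add: sum_distrib_left)
      also have "(\<Sum>l\<in>UNIV-{j}. v$l / X$l) = s - v$j / X$j"
      proof -
        have "s = v$j / X$j + (\<Sum>l\<in>UNIV-{j}. v$l / X$l)" unfolding s_def by (rule sum.remove) auto
        then show ?thesis by simp
      qed
      finally have E: "2/(X$j)^3 * v$j + P / X$j * (s - v$j / X$j) = 0"
        using hess_diag[of X j] nz by simp
      define x where "x = X$j"
      have xnz: "x \<noteq> 0" using nz by (simp add: x_def)
      have E2: "2 * (v$j) + P * s * x^2 - P * (v$j) * x = 0"
      proof -
        have "2 * (v$j) + P * s * x^2 - P * (v$j) * x = x^3 * (2/x^3 * v$j + P / x * (s - v$j / x))"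
          using xnz by (simp add: field_simps power2_eq_square power3_eq_cube)
        then show ?thesis using E by (simp add: x_def)
      qed
      have q: "x^2 + P*x - 1 = 0" using quad by (simp add: x_def)
      have "x * (y j * v$j + P * s * x) = (2 * (v$j) + P * s * x^2 - P * (v$j) * x) + 2 * (v$j) * (x^2 + P * x - 1)"
        by (simp add: y_def x_def power2_eq_square algebra_simps)
      then have "x * (y j * v$j + P * s * x) = 0" using E2 q by simp
      then show ?thesis using xnz by (simp add: x_def)
    qed
    show "v = 0"
    proof (cases "s = 0")
      case True
      then show ?thesis using star ynz by (simp add: vec_eq_iff)
    next
      case False
      have vj: "v$j / X$j = - P * s / y j" for j
      proof -
        have "y j * v$j = -(P * s * X$j)" using star[of j] by (simp add: eq_neg_iff_add_eq_0)
        then show ?thesis using ynz[of j] nz by (simp add: field_simps)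
      qed
      have "s = (\<Sum>l\<in>UNIV. v$l / X$l)" by (rule s_def)
      also have "\<dots> = (\<Sum>j\<in>UNIV. - P * s / y j)" using vj by simp
      also have "\<dots> = - (s * (P * (\<Sum>j\<in>UNIV. 1 / y j)))" by (simp add: sum_distrib_left sum_negf mult.commute)
      finally have h: "s = - (s * (P * (\<Sum>j\<in>UNIV. 1 / y j)))" .
      have "s * (P * (\<Sum>j\<in>UNIV. 1 / y j)) + s = 0" using h by (subst add_eq_0_iff)
      then have "s * (P * (\<Sum>j\<in>UNIV. 1 / y j) + 1) = 0" by (simp only: distrib_left mult_1_right)
      then have "P * (\<Sum>j\<in>UNIV. 1 / y j) + 1 = 0" using False by simp
      then have "P * (\<Sum>j\<in>UNIV. 1 / y j) = -1" by (simp add: add_eq_0_iff2)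
      then have "P * (\<Sum>j\<in>UNIV. 1/(2*X$j+P)) = -1" by (simp add: y_def)
      then show ?thesis using no_bad[OF n nz P_def quad Q] by simp
    qed
  qed
qed

end
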